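(* Let $n\geq 3$ and consider the $n$-cycle scenario. A nondisturbing behavior $\{p_1,\dots,p_n\}$ for this scenario is logically contextual if and only if there exist an index $1\leq i\leq n$, a pair $(a,b)\in\{0,1\}^2$ and $(\alpha_1,\dots,\alpha_{n-2})\in\{0,1\}^{n-2}$ such that $p_i(a,b)>0$, $p_{i+1}(b,\alpha_1)=0$, $p_{i+j}(\lnot\alpha_{j-1},\alpha_j)=0$ for all $2\leq j\leq n-2$, and $p_{i+n-1}(\lnot\alpha_{n-2},a)=0$, where indices of $p$ are taken modulo $n$ (with values in $\{1,\dots,n\}$) and $\lnot x=1-x$.
   Context: The $n$-cycle scenario has measurements $M_1,\dots,M_n$, each with outcome set $O=\{0,1\}$, and contexts $C_i=\{M_i,M_{i+1}\}$, $i=1,\dots,n$, indices modulo $n$ (so $M_{n+1}=M_1$). A behavior is a family of probability distributions $p_i$ on $\{0,1\}^2$, where $p_i(x,y)$ is the probability that $M_i=x$ and $M_{i+1}=y$. It is nondisturbing if marginals agree on shared measurements: for every $i$ and $x\in\{0,1\}$, $\sum_y p_i(y,x)=\sum_y p_{i+1}(x,y)$. Let $\bar p_i(x,y)=1$ if $p_i(x,y)>0$ and $0$ otherwise. The behavior is logically noncontextual if there exists $\bar p:\{0,1\}^n\to\{0,1\}$ such that for every $i$ and $(x,y)$, $\max\{\bar p(t): t\in\{0,1\}^n,\ t_i=x,\ t_{i+1}=y\}=\bar p_i(x,y)$; otherwise it is logically contextual. *)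

theory Defs
  imports Complex_Main
begin

(* n-cycle scenario, measurements M_0,...,M_{n-1} (0-based, indices mod n),
   outcomes {0,1} represented by bool (False = 0, True = 1).
   p i x y = probability that M_i = x and M_{(i+1) mod n} = y. *)

definition behavior :: "nat \<Rightarrow> (nat \<Rightarrow> bool \<Rightarrow> bool \<Rightarrow> real) \<Rightarrow> bool" where
  "behavior n p \<longleftrightarrow>
     (\<forall>i<n. (\<forall>x y. p i x y \<ge> 0) \<and> (\<Sum>x\<in>UNIV. \<Sum>y\<in>UNIV. p i x y) = 1)"

definition nondisturbing :: "nat \<Rightarrow> (nat \<Rightarrow> bool \<Rightarrow> bool \<Rightarrow> real) \<Rightarrow> bool" where
  "nondisturbing n p \<longleftrightarrow>
     (\<forall>i<n. \<forall>x. (\<Sum>y\<in>UNIV. p i y x) = (\<Sum>y\<in>UNIV. p ((i + 1) mod n) x y))"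

definition supp_ind :: "(nat \<Rightarrow> bool \<Rightarrow> bool \<Rightarrow> real) \<Rightarrow> nat \<Rightarrow> bool \<Rightarrow> bool \<Rightarrow> nat" where
  "supp_ind p i x y = (if p i x y > 0 then 1 else 0)"

definition logically_noncontextual :: "nat \<Rightarrow> (nat \<Rightarrow> bool \<Rightarrow> bool \<Rightarrow> real) \<Rightarrow> bool" where
  "logically_noncontextual n p \<longleftrightarrow>
     (\<exists>pb :: bool list \<Rightarrow> nat. (\<forall>t. pb t \<in> {0, 1}) \<and>
        (\<forall>i<n. \<forall>x y.
           Max {pb t | t. length t = n \<and> t ! i = x \<and> t ! ((i + 1) mod n) = y}
             = supp_ind p i x y))"

definition logically_contextual :: "nat \<Rightarrow> (nat \<Rightarrow> bool \<Rightarrow> bool \<Rightarrow> real) \<Rightarrow> bool" where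
  "logically_contextual n p \<longleftrightarrow> \<not> logically_noncontextual n p"

end

theory Submission
  imports Defs
begin

definition good :: "nat \<Rightarrow> (nat \<Rightarrow> bool \<Rightarrow> bool \<Rightarrow> real) \<Rightarrow> bool list \<Rightarrow> bool" where
  "good n p t \<longleftrightarrow> length t = n \<and> (\<forall>k<n. p k (t!k) (t!((k+1) mod n)) > 0)"

primrec Rch :: "nat \<Rightarrow> (nat \<Rightarrow> bool \<Rightarrow> bool \<Rightarrow> real) \<Rightarrow> nat \<Rightarrow> bool \<Rightarrow> nat \<Rightarrow> bool set" where
  "Rch n p i b 0 = {b}"
| "Rch n p i b (Suc m) = {y. \<exists>x\<in>Rch n p i b m. p ((i+1+m) mod n) x y > 0}"

lemma nonneg:
  assumes "behavior n p" "n > 0"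
  shows "p (m mod n) x y \<ge> 0"
  using assms unfolding behavior_def by auto

lemma ex_list:
  assumes "n \<ge> 2" "i < n"
  shows "\<exists>t::bool list. length t = n \<and> t!i = x \<and> t!((i+1) mod n) = y"
proof -
  have ij: "(i+1) mod n \<noteq> i" using assms
  proof (cases "i + 1 < n")
    case True thus ?thesis by simp
  next
    case False hence "i + 1 = n" using assms by simp
    thus ?thesis using assms by simp
  qed
  define t where "t = (replicate n x)[(i+1) mod n := y]"
  have "length t = n" "t!i = x" "t!((i+1) mod n) = y"
    using ij assms by (auto simp: t_def)
  thus ?thesis by blast
qed

lemma LNC_iff:
  assumes "n \<ge> 2"
  shows "logically_noncontextual n p \<longleftrightarrow>
    (\<forall>i<n. \<forall>x y. p i x y > 0 \<longrightarrow> (\<exists>t. good n p t \<and> t!i = x \<and> t!((i+1) mod n) = y))"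
proof
  assume "logically_noncontextual n p"
  then obtain pb :: "bool list \<Rightarrow> nat" where pb01: "\<forall>t. pb t \<in> {0,1}" and
    pbM: "\<forall>i<n. \<forall>x y. Max {pb t | t. length t = n \<and> t ! i = x \<and> t ! ((i + 1) mod n) = y}
             = supp_ind p i x y"
    unfolding logically_noncontextual_def by blast
  have fin: "finite {pb t | t. length t = n \<and> t ! i = x \<and> t ! ((i + 1) mod n) = y}" for i x y
  proof (rule finite_subset[of _ "{0,1}"])
    show "{pb t | t. length t = n \<and> t ! i = x \<and> t ! ((i + 1) mod n) = y} \<subseteq> {0,1}"
      using pb01 by (smt (verit) mem_Collect_eq subsetI)
  qed simp
  show "\<forall>i<n. \<forall>x y. p i x y > 0 \<longrightarrow> (\<exists>t. good n p t \<and> t!i = x \<and> t!((i+1) mod n) = y)"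
  proof (intro allI impI)
    fix i x y assume i: "i < n" and pos: "p i x y > 0"
    let ?A = "{pb t | t. length t = n \<and> t ! i = x \<and> t ! ((i + 1) mod n) = y}"
    have "Max ?A = 1" using pbM i pos by (simp add: supp_ind_def)
    have ne: "?A \<noteq> {}" using ex_list[OF assms i, of x y] by blast
    have "Max ?A \<in> ?A" using fin ne by (rule Max_in)
    then obtain t where t: "length t = n" "t!i = x" "t!((i+1) mod n) = y" "pb t = 1"
      using \<open>Max ?A = 1\<close> by auto
    have "good n p t" unfolding good_def
    proof (intro conjI allI impI)
      show "length t = n" by fact
      fix k assume k: "k < n"
      let ?B = "{pb s | s. length s = n \<and> s ! k = t!k \<and> s ! ((k + 1) mod n) = t!((k+1) mod n)}"
      have "1 \<in> ?B" using t by force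
      hence "1 \<le> Max ?B" using fin by (intro Max_ge) auto
      hence "supp_ind p k (t!k) (t!((k+1) mod n)) \<ge> 1" using pbM k by simp
      thus "p k (t!k) (t!((k+1) mod n)) > 0" by (simp add: supp_ind_def split: if_splits)
    qed
    thus "\<exists>t. good n p t \<and> t!i = x \<and> t!((i+1) mod n) = y" using t by blast
  qed
next
  assume H: "\<forall>i<n. \<forall>x y. p i x y > 0 \<longrightarrow> (\<exists>t. good n p t \<and> t!i = x \<and> t!((i+1) mod n) = y)"
  define pb :: "bool list \<Rightarrow> nat" where "pb t = (if good n p t then 1 else 0)" for t
  show "logically_noncontextual n p" unfolding logically_noncontextual_def
  proof (intro exI[of _ pb] conjI allI impI)
    show "pb t \<in> {0,1}" for t by (simp add: pb_def)
    fix i x y assume i: "i < n"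
    let ?A = "{pb t | t. length t = n \<and> t ! i = x \<and> t ! ((i + 1) mod n) = y}"
    have fin: "finite ?A"
      by (rule finite_subset[of _ "{0,1}"]) (auto simp: pb_def)
    have sub: "?A \<subseteq> {0,1}" by (auto simp: pb_def)
    show "Max ?A = supp_ind p i x y"
    proof (cases "p i x y > 0")
      case True
      then obtain t where t: "good n p t" "t!i = x" "t!((i+1) mod n) = y" using H i by blast
      have "pb t = 1" "length t = n" using t(1) by (auto simp: pb_def good_def)
      hence "1 \<in> ?A" using t unfolding mem_Collect_eq by (intro exI[of _ t]) simp
      hence "Max ?A = 1" using fin sub
        by (intro Max_eqI) auto
      thus ?thesis using True by (simp add: supp_ind_def)
    next
      case False
      obtain t :: "bool list" where "length t = n" "t!i = x" "t!((i+1) mod n) = y"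
        using ex_list[OF assms i] by blast
      have "\<not> good n p t" using False \<open>t!i = x\<close> \<open>t!((i+1) mod n) = y\<close> i
        unfolding good_def by auto
      hence "pb t = 0" by (simp add: pb_def)
      hence "0 \<in> ?A" using \<open>length t = n\<close> \<open>t!i = x\<close> \<open>t!((i+1) mod n) = y\<close>
        unfolding mem_Collect_eq by (intro exI[of _ t]) simp
      have "\<forall>a\<in>?A. a = 0"
      proof
        fix a assume "a \<in> ?A"
        then obtain s where s: "a = pb s" "length s = n" "s!i = x" "s!((i+1) mod n) = y" by blast
        have "\<not> good n p s" using False s i unfolding good_def by auto
        thus "a = 0" using s by (simp add: pb_def)
      qed
      hence "Max ?A = 0" using fin \<open>0 \<in> ?A\<close> by (intro Max_eqI) auto
      thus ?thesis using False by (simp add: supp_ind_def)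
    qed
  qed
qed



lemma good_mod:
  assumes "good n p t" "n > 0"
  shows "p (m mod n) (t!(m mod n)) (t!(Suc m mod n)) > 0"
proof -
  have "p (m mod n) (t!(m mod n)) (t!((m mod n + 1) mod n)) > 0"
    using assms unfolding good_def by auto
  moreover have "(m mod n + 1) mod n = Suc m mod n" by (simp add: mod_Suc_eq)
  ultimately show ?thesis by simp
qed

lemma fwd:
  assumes "behavior n p" "nondisturbing n p" "n > 0" "p (k mod n) x y > 0"
  shows "\<exists>z. p (Suc k mod n) y z > 0"
proof -
  have "(\<Sum>u\<in>UNIV. p (k mod n) u y) = (\<Sum>z\<in>UNIV. p ((k mod n + 1) mod n) y z)"
    using assms(2,3) unfolding nondisturbing_def by auto
  moreover have "(k mod n + 1) mod n = Suc k mod n" by (simp add: mod_Suc_eq)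
  moreover have "(\<Sum>u\<in>UNIV. p (k mod n) u y) > 0"
    using assms(4) nonneg[OF assms(1,3), of k _ y] by (cases x) (auto simp: UNIV_bool add_pos_nonneg add_nonneg_pos)
  ultimately have "p (Suc k mod n) y True + p (Suc k mod n) y False > 0" by (simp add: UNIV_bool)
  thus ?thesis by (metis add_nonpos_nonpos not_le)
qed

lemma bwd:
  assumes "behavior n p" "nondisturbing n p" "n > 0" "p (Suc k mod n) y z > 0"
  shows "\<exists>x. p (k mod n) x y > 0"
proof -
  have "(\<Sum>u\<in>UNIV. p (k mod n) u y) = (\<Sum>z\<in>UNIV. p ((k mod n + 1) mod n) y z)"
    using assms(2,3) unfolding nondisturbing_def by auto
  moreover have "(k mod n + 1) mod n = Suc k mod n" by (simp add: mod_Suc_eq)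
  moreover have "(\<Sum>u\<in>UNIV. p (Suc k mod n) y u) > 0"
    using assms(4) nonneg[OF assms(1,3), of "Suc k" y] by (cases z) (auto simp: UNIV_bool add_pos_nonneg add_nonneg_pos)
  ultimately have "p (k mod n) True y + p (k mod n) False y > 0" by (simp add: UNIV_bool)
  thus ?thesis by (metis add_nonpos_nonpos not_le)
qed

lemma path:
  "x \<in> Rch n p i b m \<Longrightarrow> \<exists>f. f 0 = b \<and> f m = x \<and> (\<forall>l<m. p ((i+1+l) mod n) (f l) (f (Suc l)) > 0)"
proof (induction m arbitrary: x)
  case 0 thus ?case by auto
next
  case (Suc m)
  then obtain x' where x': "x' \<in> Rch n p i b m" "p ((i+1+m) mod n) x' x > 0" by auto
  obtain f where f: "f 0 = b" "f m = x'" "\<forall>l<m. p ((i+1+l) mod n) (f l) (f (Suc l)) > 0"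
    using Suc.IH[OF x'(1)] by blast
  show ?case
  proof (intro exI[of _ "f(Suc m := x)"] conjI allI impI)
    fix l assume "l < Suc m"
    thus "p ((i+1+l) mod n) ((f(Suc m := x)) l) ((f(Suc m := x)) (Suc l)) > 0"
      using f x' by (cases "l = m") auto
  qed (use f in auto)
qed

lemma closing:
  assumes "n \<ge> 2" "i < n" "p i a b > 0" "f 0 = b" "f (n-1) = a"
    "\<forall>l<n-1. p ((i+1+l) mod n) (f l) (f (Suc l)) > 0"
  shows "\<exists>t. good n p t \<and> t!i = a \<and> t!((i+1) mod n) = b"
proof -
  define t where "t = map (\<lambda>k. if i < k then f (k - i - 1) else f (k + n - i - 1)) [0..<n]"
  have len: "length t = n" by (simp add: t_def)
  have ti: "t!i = a" using assms by (simp add: t_def)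
  have ti1: "t!((i+1) mod n) = b"
  proof (cases "i + 1 < n")
    case True thus ?thesis using assms by (simp add: t_def)
  next
    case False hence "i + 1 = n" using assms by simp
    thus ?thesis using assms by (simp add: t_def)
  qed
  have "p k (t!k) (t!((k+1) mod n)) > 0" if k: "k < n" for k
  proof -
    consider "i < k" "k + 1 < n" | "i < k" "k + 1 = n" | "k < i" | "k = i" using k by linarith
    thus ?thesis
    proof cases
      case 1
      have "p ((i+1+(k-i-1)) mod n) (f (k-i-1)) (f (Suc (k-i-1))) > 0"
        using assms(6) 1 by (intro assms(6)[rule_format]) linarith
      moreover have "i+1+(k-i-1) = k" "Suc (k-i-1) = k + 1 - i - 1" using 1 by auto
      ultimately show ?thesis using 1 k by (simp add: t_def)
    next
      case 2
      have "p ((i+1+(k-i-1)) mod n) (f (k-i-1)) (f (Suc (k-i-1))) > 0"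
        using assms(6) 2 by (intro assms(6)[rule_format]) linarith
      moreover have "i+1+(k-i-1) = k" "Suc (k-i-1) = 0 + n - i - 1" using 2 by auto
      moreover have "(k+1) mod n = 0" using 2 by simp
      moreover have "\<not> i < 0" by simp
      ultimately show ?thesis using 2 k by (simp add: t_def)
    next
      case 3
      have "p ((i+1+(k+n-i-1)) mod n) (f (k+n-i-1)) (f (Suc (k+n-i-1))) > 0"
        using assms(2) 3 by (intro assms(6)[rule_format]) linarith
      moreover have "(i+1+(k+n-i-1)) mod n = k"
      proof -
        have "i+1+(k+n-i-1) = k + n" using 3 assms(2) by linarith
        thus ?thesis using k by simp
      qed
      moreover have "Suc (k+n-i-1) = (k+1)+n-i-1" using 3 assms(2) by linarith
      moreover have "(k+1) mod n = k + 1" using 3 assms by simp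
      ultimately show ?thesis using 3 k assms by (simp add: t_def)
    next
      case 4 thus ?thesis using ti ti1 assms by simp
    qed
  qed
  hence "good n p t" using len by (simp add: good_def)
  thus ?thesis using ti ti1 by blast
qed


lemma Rch_sub:
  assumes "behavior n p" "nondisturbing n p" "n > 0" "i < n" "p i a b > 0"
  shows "x \<in> Rch n p i b m \<Longrightarrow> \<exists>z. p ((i+1+m) mod n) x z > 0"
proof (induction m arbitrary: x)
  case 0
  have "p (i mod n) a b > 0" using assms by simp
  from fwd[OF assms(1-3) this] show ?case using 0 by simp
next
  case (Suc m)
  then obtain x' where "p ((i+1+m) mod n) x' x > 0" by auto
  from fwd[OF assms(1-3) this] show ?case by simp
qed

lemma Rch_ne:
  assumes "behavior n p" "nondisturbing n p" "n > 0" "i < n" "p i a b > 0"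
  shows "\<exists>x. x \<in> Rch n p i b m"
proof -
  have "\<exists>x\<in>Rch n p i b m. \<exists>a. p ((i+m) mod n) a x > 0"
  proof (induction m)
    case 0 thus ?case using assms by auto
  next
    case (Suc m)
    then obtain x a' where x: "x \<in> Rch n p i b m" "p ((i+m) mod n) a' x > 0" by auto
    obtain z where "p (Suc (i+m) mod n) x z > 0" using fwd[OF assms(1-3) x(2)] by blast
    thus ?case using x by (intro bexI[of _ z] exI[of _ x]) auto
  qed
  thus ?thesis by blast
qed

lemma Rch_prop:
  assumes "behavior n p" "nondisturbing n p" "n > 0" "i < n" "p i a b > 0"
    "\<forall>x. x \<in> Rch n p i b m \<longleftrightarrow> (\<exists>z. p ((i+1+m) mod n) x z > 0)"
  shows "\<forall>x. x \<in> Rch n p i b (m + d) \<longleftrightarrow> (\<exists>z. p ((i+1+(m+d)) mod n) x z > 0)"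
proof (induction d)
  case 0 thus ?case using assms(6) by simp
next
  case (Suc d)
  show ?case
  proof (intro allI iffI)
    fix x assume "x \<in> Rch n p i b (m + Suc d)"
    thus "\<exists>z. p ((i+1+(m+Suc d)) mod n) x z > 0" using Rch_sub[OF assms(1-5)] by blast
  next
    fix x assume "\<exists>z. p ((i+1+(m+Suc d)) mod n) x z > 0"
    then obtain z where "p (Suc (i+1+(m+d)) mod n) x z > 0" by auto
    from bwd[OF assms(1-3) this] obtain x' where x': "p ((i+1+(m+d)) mod n) x' x > 0" by blast
    hence "x' \<in> Rch n p i b (m+d)" using Suc.IH by blast
    thus "x \<in> Rch n p i b (m + Suc d)" using x' by auto
  qed
qed

lemma Rch_zero:
  assumes "behavior n p" "n > 0" "x \<in> Rch n p i b m" "y \<notin> Rch n p i b (Suc m)"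
  shows "p ((i+1+m) mod n) x y = 0"
proof -
  have "\<not> p ((i+1+m) mod n) x y > 0" using assms(3,4) by auto
  thus ?thesis using nonneg[OF assms(1,2)] by (meson antisym not_le)
qed

theorem theorem2:
  fixes n :: nat and p :: "nat \<Rightarrow> bool \<Rightarrow> bool \<Rightarrow> real"
  assumes "n \<ge> 3" and "behavior n p" and "nondisturbing n p"
  shows "logically_contextual n p \<longleftrightarrow>
    (\<exists>i<n. \<exists>a b. \<exists>\<alpha> :: nat \<Rightarrow> bool.
       p i a b > 0 \<and>
       p ((i + 1) mod n) b (\<alpha> 1) = 0 \<and>
       (\<forall>j\<in>{2..n - 2}. p ((i + j) mod n) (\<not> \<alpha> (j - 1)) (\<alpha> j) = 0) \<and>
       p ((i + n - 1) mod n) (\<not> \<alpha> (n - 2)) a = 0)"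
proof
  have n2: "n \<ge> 2" and n0: "n > 0" using assms(1) by auto
  assume "logically_contextual n p"
  then obtain i a b where i: "i < n" and pab: "p i a b > 0" and
    nog: "\<not> (\<exists>t. good n p t \<and> t!i = a \<and> t!((i+1) mod n) = b)"
    unfolding logically_contextual_def LNC_iff[OF n2] by blast
  note R = Rch_sub[OF assms(2,3) n0 i pab] Rch_prop[OF assms(2,3) n0 i pab]
    Rch_ne[OF assms(2,3) n0 i pab]
  have aR: "a \<notin> Rch n p i b (n-1)"
  proof
    assume "a \<in> Rch n p i b (n-1)"
    from path[OF this] obtain f where "f 0 = b" "f (n-1) = a"
      "\<forall>l<n-1. p ((i+1+l) mod n) (f l) (f (Suc l)) > 0" by blast
    from closing[OF n2 i pab this] nog show False by blast
  qed
  have notU: "\<exists>x. x \<notin> Rch n p i b m" if m: "m \<le> n-1" for m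
  proof (rule ccontr)
    assume "\<not> ?thesis"
    hence "\<forall>x. x \<in> Rch n p i b m \<longleftrightarrow> (\<exists>z. p ((i+1+m) mod n) x z > 0)" using R(1) by blast
    from R(2)[OF this, of "n-1-m"] have
      "a \<in> Rch n p i b (m + (n-1-m)) \<longleftrightarrow> (\<exists>z. p ((i+1+(m + (n-1-m))) mod n) a z > 0)" by blast
    moreover have "m + (n-1-m) = n - 1" using m by simp
    ultimately have
      "a \<in> Rch n p i b (n-1) \<longleftrightarrow> (\<exists>z. p ((i+1+(n-1)) mod n) a z > 0)" by simp
    moreover have "(i+1+(n-1)) mod n = i" using n0 i by simp
    ultimately show False using aR pab by (metis (no_types))
  qed
  define r where "r m = (True \<in> Rch n p i b m)" for m
  have rin: "r m \<in> Rch n p i b m" if "m \<le> n-1" for m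
    using R(3)[of m] by (cases "r m") (auto simp: r_def, metis (full_types))
  have rout: "(\<not> r m) \<notin> Rch n p i b m" if "m \<le> n-1" for m
    using notU[OF that] by (cases "r m") (auto simp: r_def, metis (full_types))
  have r0: "r 0 = b" using rin[of 0] by simp
  show "\<exists>i<n. \<exists>a b. \<exists>\<alpha> :: nat \<Rightarrow> bool.
       p i a b > 0 \<and>
       p ((i + 1) mod n) b (\<alpha> 1) = 0 \<and>
       (\<forall>j\<in>{2..n - 2}. p ((i + j) mod n) (\<not> \<alpha> (j - 1)) (\<alpha> j) = 0) \<and>
       p ((i + n - 1) mod n) (\<not> \<alpha> (n - 2)) a = 0"
  proof -
    have h1: "p ((i + 1) mod n) b (\<not> r 1) = 0"
    proof -
      have "r 0 \<in> Rch n p i b 0" "(\<not> r 1) \<notin> Rch n p i b (Suc 0)" using rin[of 0] rout[of 1] assms(1) by auto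
      from Rch_zero[OF assms(2) n0 this] show ?thesis using r0 by simp
    qed
    have h2: "p ((i + j) mod n) (\<not> \<not> r (j - 1)) (\<not> r j) = 0" if j: "j \<in> {2..n-2}" for j
    proof -
      have e: "Suc (j-1) = j" "i+1+(j-1) = i + j" "j - 1 \<le> n - 1" "j \<le> n - 1" using j by auto
      have "r (j-1) \<in> Rch n p i b (j-1)" "(\<not> r j) \<notin> Rch n p i b (Suc (j-1))"
        using rin[OF e(3)] rout[OF e(4)] e(1) by auto
      from Rch_zero[OF assms(2) n0 this] show ?thesis using e by simp
    qed
    have e: "Suc (n-2) = n-1" "i+1+(n-2) = i+n-1" using assms(1) by auto
    have h3: "p ((i + n - 1) mod n) (\<not> \<not> r (n - 2)) a = 0"
    proof -
      have "r (n-2) \<in> Rch n p i b (n-2)" "a \<notin> Rch n p i b (Suc (n-2))"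
        using rin[of "n-2"] aR e by auto
      from Rch_zero[OF assms(2) n0 this] show ?thesis using e by simp
    qed
    show ?thesis
      apply (rule exI[of _ i], rule conjI[OF i])
      apply (rule exI[of _ a], rule exI[of _ b], rule exI[of _ "\<lambda>j. \<not> r j"])
      using pab h1 h2 h3 by blast
  qed
next
  have n2: "n \<ge> 2" and n0: "n > 0" using assms(1) by auto
  assume "\<exists>i<n. \<exists>a b. \<exists>\<alpha> :: nat \<Rightarrow> bool.
       p i a b > 0 \<and>
       p ((i + 1) mod n) b (\<alpha> 1) = 0 \<and>
       (\<forall>j\<in>{2..n - 2}. p ((i + j) mod n) (\<not> \<alpha> (j - 1)) (\<alpha> j) = 0) \<and>
       p ((i + n - 1) mod n) (\<not> \<alpha> (n - 2)) a = 0"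
  then obtain i a b and \<alpha> :: "nat \<Rightarrow> bool" where i: "i < n" and pab: "p i a b > 0" and
    c1: "p ((i + 1) mod n) b (\<alpha> 1) = 0" and
    cj: "\<forall>j\<in>{2..n - 2}. p ((i + j) mod n) (\<not> \<alpha> (j - 1)) (\<alpha> j) = 0" and
    cl: "p ((i + n - 1) mod n) (\<not> \<alpha> (n - 2)) a = 0" by blast
  show "logically_contextual n p"
    unfolding logically_contextual_def LNC_iff[OF n2]
  proof
    assume "\<forall>i<n. \<forall>x y. p i x y > 0 \<longrightarrow> (\<exists>t. good n p t \<and> t!i = x \<and> t!((i+1) mod n) = y)"
    then obtain t where t: "good n p t" "t!i = a" "t!((i+1) mod n) = b" using i pab by blast
    have claim: "1 \<le> j \<longrightarrow> j \<le> n-2 \<longrightarrow> t!((i+j+1) mod n) = (\<not> \<alpha> j)" for j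
    proof (induction j)
      case 0 thus ?case by simp
    next
      case (Suc j)
      show ?case
      proof (intro impI)
        assume j: "1 \<le> Suc j" "Suc j \<le> n-2"
        show "t!((i+Suc j+1) mod n) = (\<not> \<alpha> (Suc j))"
        proof (cases "j = 0")
          case True
          have "p ((i+1) mod n) (t!((i+1) mod n)) (t!(Suc (i+1) mod n)) > 0"
            using good_mod[OF t(1) n0] by blast
          hence "0 < p ((i+1) mod n) b (t!(Suc (i+1) mod n))" using t(3) by simp
          hence "t!(Suc (i+1) mod n) \<noteq> \<alpha> 1" using c1 by (intro notI) simp
          thus ?thesis using True by auto
        next
          case False
          hence IH: "t!((i+j+1) mod n) = (\<not> \<alpha> j)" using Suc.IH j by simp
          have "p ((i+j+1) mod n) (t!((i+j+1) mod n)) (t!(Suc (i+j+1) mod n)) > 0"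
            using good_mod[OF t(1) n0] by blast
          moreover have "Suc j \<in> {2..n-2}" using False j by auto
          hence "p ((i+Suc j) mod n) (\<not> \<alpha> j) (\<alpha> (Suc j)) = 0" using cj by fastforce
          moreover have "(i+j+1) mod n = (i+Suc j) mod n" by simp
          ultimately have "t!(Suc (i+j+1) mod n) \<noteq> \<alpha> (Suc j)" using IH
            by (intro notI) simp
          thus ?thesis by auto
        qed
      qed
    qed
    have e: "i+(n-2)+1 = i+n-1" "Suc (i+n-1) = i + n" using assms(1) by auto
    have "1 \<le> n - 2" using assms(1) by simp
    have "t!((i+(n-2)+1) mod n) = (\<not> \<alpha> (n-2))" using claim[of "n-2"] \<open>1 \<le> n - 2\<close> by blast
    hence "t!((i+n-1) mod n) = (\<not> \<alpha> (n-2))" using e(1) by metis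
    moreover note e
    moreover have "p ((i+n-1) mod n) (t!((i+n-1) mod n)) (t!(Suc (i+n-1) mod n)) > 0"
      using good_mod[OF t(1) n0] by blast
    ultimately have "p ((i+n-1) mod n) (\<not> \<alpha> (n-2)) (t!i) > 0" using i by simp
    thus False using cl t(2) by simp
  qed
qed

end
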